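(* Let $R$ be a ring and let $M$ be a right $R$-module which is both a multiplication module and quasi-pseudo principally injective. Then every $M$-cyclic submodule of $M$ is itself quasi-pseudo principally injective.
   Context: All rings are associative with identity and all modules are unitary right $R$-modules. A submodule $N$ of $M$ is called $M$-cyclic if $N\cong M/L$ for some submodule $L$ of $M$; equivalently, $N$ is the image of some endomorphism of $M$. For right $R$-modules $M,N$, the module $M$ is called pseudo principally $N$-injective if for every $N$-cyclic submodule $A$ of $N$, every $R$-monomorphism $A\to M$ extends to an $R$-homomorphism $N\to M$. A module $M$ is quasi-pseudo principally injective (quasi-pp-injective) if it is pseudo principally $M$-injective. A module $M$ is a multiplication module if every submodule $N$ of $M$ is of the form $N=MI$ for some right ideal $I$ of $R$. *)

theory Defs
  imports "HOL-Algebra.Ring" "HOL-Algebra.Ideal"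
begin

text \<open>The module is an abelian group (additive structure of a ring record; its
  multiplicative part is ignored) together with a right scalar action
  rsmult M x a, read as x*a.\<close>

record ('a, 'b) rmodule = "'b ring" +
  rsmult :: "'b \<Rightarrow> 'a \<Rightarrow> 'b"

definition right_module :: "('a, 'c) ring_scheme \<Rightarrow> ('a, 'b, 'd) rmodule_scheme \<Rightarrow> bool" where
  "right_module R M \<longleftrightarrow> ring R \<and> abelian_group M \<and>
     (\<forall>x\<in>carrier M. \<forall>a\<in>carrier R. rsmult M x a \<in> carrier M) \<and>
     (\<forall>x\<in>carrier M. \<forall>y\<in>carrier M. \<forall>a\<in>carrier R.
        rsmult M (x \<oplus>\<^bsub>M\<^esub> y) a = rsmult M x a \<oplus>\<^bsub>M\<^esub> rsmult M y a) \<and>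
     (\<forall>x\<in>carrier M. \<forall>a\<in>carrier R. \<forall>b\<in>carrier R.
        rsmult M x (a \<oplus>\<^bsub>R\<^esub> b) = rsmult M x a \<oplus>\<^bsub>M\<^esub> rsmult M x b) \<and>
     (\<forall>x\<in>carrier M. \<forall>a\<in>carrier R. \<forall>b\<in>carrier R.
        rsmult M x (a \<otimes>\<^bsub>R\<^esub> b) = rsmult M (rsmult M x a) b) \<and>
     (\<forall>x\<in>carrier M. rsmult M x \<one>\<^bsub>R\<^esub> = x)"

definition submodule :: "('a, 'c) ring_scheme \<Rightarrow> ('a, 'b, 'd) rmodule_scheme \<Rightarrow> 'b set \<Rightarrow> bool" where
  "submodule R M N \<longleftrightarrow> additive_subgroup N M \<and>
     (\<forall>x\<in>N. \<forall>a\<in>carrier R. rsmult M x a \<in> N)"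

text \<open>R-homomorphisms between right R-modules (only the values on the carrier matter).\<close>
definition mod_hom :: "('a, 'c) ring_scheme \<Rightarrow> ('a, 'b, 'd) rmodule_scheme \<Rightarrow> ('a, 'e, 'f) rmodule_scheme \<Rightarrow> ('b \<Rightarrow> 'e) set" where
  "mod_hom R M N = {f. f \<in> carrier M \<rightarrow> carrier N \<and>
     (\<forall>x\<in>carrier M. \<forall>y\<in>carrier M. f (x \<oplus>\<^bsub>M\<^esub> y) = f x \<oplus>\<^bsub>N\<^esub> f y) \<and>
     (\<forall>x\<in>carrier M. \<forall>a\<in>carrier R. f (rsmult M x a) = rsmult N (f x) a)}"

definition M_cyclic :: "('a, 'c) ring_scheme \<Rightarrow> ('a, 'b, 'd) rmodule_scheme \<Rightarrow> 'b set \<Rightarrow> bool" where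
  "M_cyclic R M A \<longleftrightarrow> (\<exists>f\<in>mod_hom R M M. f ` carrier M = A)"

definition pseudo_principally_injective ::
  "('a, 'c) ring_scheme \<Rightarrow> ('a, 'b, 'd) rmodule_scheme \<Rightarrow> ('a, 'e, 'f) rmodule_scheme \<Rightarrow> bool" where
  "pseudo_principally_injective R M N \<longleftrightarrow>
     (\<forall>A. M_cyclic R N A \<longrightarrow>
        (\<forall>f\<in>mod_hom R (N\<lparr>carrier := A\<rparr>) M. inj_on f A \<longrightarrow>
           (\<exists>g\<in>mod_hom R N M. \<forall>x\<in>A. g x = f x)))"

definition quasi_pp_injective :: "('a, 'c) ring_scheme \<Rightarrow> ('a, 'b, 'd) rmodule_scheme \<Rightarrow> bool" where
  "quasi_pp_injective R M \<longleftrightarrow> pseudo_principally_injective R M M"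

definition right_ideal :: "('a, 'c) ring_scheme \<Rightarrow> 'a set \<Rightarrow> bool" where
  "right_ideal R I \<longleftrightarrow> additive_subgroup I R \<and>
     (\<forall>x\<in>I. \<forall>r\<in>carrier R. x \<otimes>\<^bsub>R\<^esub> r \<in> I)"

text \<open>MI: the submodule of M generated by all products x*a with x in M and a in I
  (i.e. the set of finite sums of such products).\<close>
definition mod_ideal_prod :: "('a, 'c) ring_scheme \<Rightarrow> ('a, 'b, 'd) rmodule_scheme \<Rightarrow> 'a set \<Rightarrow> 'b set" where
  "mod_ideal_prod R M I =
     \<Inter>{N. submodule R M N \<and> {rsmult M x a | x a. x \<in> carrier M \<and> a \<in> I} \<subseteq> N}"

definition multiplication_module :: "('a, 'c) ring_scheme \<Rightarrow> ('a, 'b, 'd) rmodule_scheme \<Rightarrow> bool" where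
  "multiplication_module R M \<longleftrightarrow>
     (\<forall>N. submodule R M N \<longrightarrow> (\<exists>I. right_ideal R I \<and> N = mod_ideal_prod R M I))"

end

theory Submission
  imports Defs
begin

lemma hom_group_hom:
  assumes "right_module R M" "f \<in> mod_hom R M M"
  shows "group_hom (add_monoid M) (add_monoid M) f"
proof -
  have ag: "abelian_group M" using assms(1) unfolding right_module_def by blast
  hence g: "group (add_monoid M)" by (simp add: abelian_group.a_group)
  show ?thesis
    apply (rule group_hom.intro[OF g g])
    apply (unfold group_hom_axioms_def hom_def)
    using assms(2) unfolding mod_hom_def by auto
qed

lemma img_submodule:
  assumes "right_module R M" "f \<in> mod_hom R M M"
  shows "submodule R M (f ` carrier M)"
proof -
  interpret gh: group_hom "add_monoid M" "add_monoid M" f using hom_group_hom[OF assms] .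
  have "subgroup (carrier M) (add_monoid M)"
    using gh.G.subgroup_self by simp
  hence "subgroup (f ` carrier M) (add_monoid M)"
    using gh.subgroup_img_is_subgroup by simp
  moreover have "\<forall>x\<in>f ` carrier M. \<forall>a\<in>carrier R. rsmult M x a \<in> f ` carrier M"
  proof (intro ballI)
    fix y a assume "y \<in> f ` carrier M" "a \<in> carrier R"
    then obtain x where x: "x \<in> carrier M" "y = f x" by auto
    have "rsmult M x a \<in> carrier M" using assms(1) x \<open>a \<in> carrier R\<close> unfolding right_module_def by blast
    moreover have "f (rsmult M x a) = rsmult M y a" using assms(2) x \<open>a \<in> carrier R\<close> unfolding mod_hom_def by auto
    ultimately show "rsmult M y a \<in> f ` carrier M" by (metis image_eqI)
  qed
  ultimately show ?thesis unfolding submodule_def by (simp add: additive_subgroupI)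
qed

lemma preimg_submodule:
  assumes "right_module R M" "g \<in> mod_hom R M M" "submodule R M N"
  shows "submodule R M {x \<in> carrier M. g x \<in> N}"
proof -
  interpret gh: group_hom "add_monoid M" "add_monoid M" g using hom_group_hom[OF assms(1,2)] .
  have sN: "subgroup N (add_monoid M)" using assms(3) unfolding submodule_def additive_subgroup_def by blast
  have "subgroup {x \<in> carrier M. g x \<in> N} (add_monoid M)"
  proof (rule gh.G.subgroupI)
    show "{x \<in> carrier M. g x \<in> N} \<subseteq> carrier (add_monoid M)" by auto
    show "{x \<in> carrier M. g x \<in> N} \<noteq> {}"
      using gh.hom_one subgroup.one_closed[OF sN] gh.G.one_closed by force
  next
    fix a assume "a \<in> {x \<in> carrier M. g x \<in> N}"
    then show "inv\<^bsub>add_monoid M\<^esub> a \<in> {x \<in> carrier M. g x \<in> N}"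
      using gh.hom_inv subgroup.m_inv_closed[OF sN] gh.G.inv_closed by auto
  next
    fix a b assume "a \<in> {x \<in> carrier M. g x \<in> N}" "b \<in> {x \<in> carrier M. g x \<in> N}"
    then show "a \<otimes>\<^bsub>add_monoid M\<^esub> b \<in> {x \<in> carrier M. g x \<in> N}"
      using gh.hom_mult subgroup.m_closed[OF sN] gh.G.m_closed by auto
  qed
  moreover have "\<forall>x\<in>{x \<in> carrier M. g x \<in> N}. \<forall>a\<in>carrier R. rsmult M x a \<in> {x \<in> carrier M. g x \<in> N}"
    using assms unfolding right_module_def mod_hom_def submodule_def by auto
  ultimately show ?thesis unfolding submodule_def by (simp add: additive_subgroupI)
qed

lemma fully_invariant:
  assumes "right_module R M" "multiplication_module R M" "submodule R M N" "g \<in> mod_hom R M M"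
  shows "g ` N \<subseteq> N"
proof -
  obtain I where I: "right_ideal R I" "N = mod_ideal_prod R M I"
    using assms(2,3) unfolding multiplication_module_def by blast
  let ?P = "{x \<in> carrier M. g x \<in> N}"
  have IR: "I \<subseteq> carrier R" using I(1) unfolding right_ideal_def
    by (meson additive_subgroup.a_subset)
  have gens: "{rsmult M x a | x a. x \<in> carrier M \<and> a \<in> I} \<subseteq> N"
    unfolding I(2) mod_ideal_prod_def by blast
  have "{rsmult M x a | x a. x \<in> carrier M \<and> a \<in> I} \<subseteq> ?P"
  proof
    fix y assume "y \<in> {rsmult M x a | x a. x \<in> carrier M \<and> a \<in> I}"
    then obtain x a where xa: "y = rsmult M x a" "x \<in> carrier M" "a \<in> I" by blast
    have a: "a \<in> carrier R" using IR xa by blast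
    have "g y = rsmult M (g x) a" using assms(4) xa a unfolding mod_hom_def by auto
    moreover have "g x \<in> carrier M" using assms(4) xa unfolding mod_hom_def by auto
    ultimately have "g y \<in> N" using gens xa by blast
    moreover have "y \<in> carrier M" using assms(1) xa a unfolding right_module_def by blast
    ultimately show "y \<in> ?P" by blast
  qed
  with preimg_submodule[OF assms(1,4,3)] have "N \<subseteq> ?P"
    unfolding I(2) mod_ideal_prod_def by blast
  thus ?thesis by blast
qed

theorem proposition2p2:
  fixes R :: "('a, 'c) ring_scheme" and M :: "('a, 'b) rmodule" and N :: "'b set"
  assumes "right_module R M"
    and "multiplication_module R M"
    and "quasi_pp_injective R M"
    and "M_cyclic R M N"
  shows "quasi_pp_injective R (M\<lparr>carrier := N\<rparr>)"
proof -
  obtain \<phi> where phi: "\<phi> \<in> mod_hom R M M" "\<phi> ` carrier M = N"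
    using assms(4) unfolding M_cyclic_def by blast
  have NM: "N \<subseteq> carrier M" using phi unfolding mod_hom_def by auto
  have subN: "submodule R M N" using img_submodule[OF assms(1) phi(1)] phi(2) by simp
  show ?thesis
    unfolding quasi_pp_injective_def pseudo_principally_injective_def
  proof (intro allI impI ballI)
    fix A f
    assume cyc: "M_cyclic R (M\<lparr>carrier := N\<rparr>) A"
      and f: "f \<in> mod_hom R (M\<lparr>carrier := N\<rparr>\<lparr>carrier := A\<rparr>) (M\<lparr>carrier := N\<rparr>)"
      and inj: "inj_on f A"
    obtain h where h: "h \<in> mod_hom R (M\<lparr>carrier := N\<rparr>) (M\<lparr>carrier := N\<rparr>)" "h ` N = A"
      using cyc unfolding M_cyclic_def by auto
    have k: "h \<circ> \<phi> \<in> mod_hom R M M"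
      using h(1) phi NM unfolding mod_hom_def by (auto simp: Pi_def image_subset_iff)
    have "(h \<circ> \<phi>) ` carrier M = A" using h(2) phi(2) by (metis image_comp)
    hence cA: "M_cyclic R M A" using k unfolding M_cyclic_def by blast
    have f': "f \<in> mod_hom R (M\<lparr>carrier := A\<rparr>) M"
      using f NM unfolding mod_hom_def by (auto simp: Pi_def)
    obtain g where g: "g \<in> mod_hom R M M" "\<forall>x\<in>A. g x = f x"
      using assms(3) cA f' inj unfolding quasi_pp_injective_def pseudo_principally_injective_def
      by blast
    have gN: "g ` N \<subseteq> N" using fully_invariant[OF assms(1,2) subN g(1)] .
    have "g \<in> mod_hom R (M\<lparr>carrier := N\<rparr>) (M\<lparr>carrier := N\<rparr>)"
      using g(1) gN NM unfolding mod_hom_def by (simp add: Pi_def subset_iff)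
    with g(2) show "\<exists>g\<in>mod_hom R (M\<lparr>carrier := N\<rparr>) (M\<lparr>carrier := N\<rparr>). \<forall>x\<in>A. g x = f x"
      by blast
  qed
qed

end
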